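(* Let $k\geq 2$ be an integer and let $G=(V,E)$ be a graph on $n$ vertices. Let $\sim$ be a symmetric binary relation on $E$ such that for every $uv\in E$ and every $w\in V$, $w$ has at most $s$ neighbours $z\in V$ with $uv\sim wz$. Then the number of homomorphic $2k$-cycles $(x_1,\dots,x_{2k})$ in $G$ such that $x_ix_{i+1}\sim x_jx_{j+1}$ for some $i\neq j$ (indices modulo $2k$) is at most $$32k^{3/2}s^{1/2}\Delta(G)^{1/2}n^{\frac{1}{2k}}\hom(C_{2k},G)^{1-\frac{1}{2k}}.$$
   Context: A homomorphic $2k$-cycle in $G$ is a tuple $(x_1,\dots,x_{2k})\in V^{2k}$ (not necessarily distinct) with $x_ix_{i+1}\in E$ for all $1\leq i\leq 2k$, where $x_{2k+1}:=x_1$. $\hom(H,G)$ denotes the number of graph homomorphisms from $H$ to $G$ (maps $V(H)\to V(G)$ sending edges to edges); thus $\hom(C_{2k},G)$ is the number of homomorphic $2k$-cycles. $\Delta(G)$ is the maximum degree. *)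

theory Defs
  imports Complex_Main
begin

definition simple_graph :: "'a set \<Rightarrow> 'a set set \<Rightarrow> bool" where
  "simple_graph V E \<longleftrightarrow> finite V \<and> (\<forall>e\<in>E. \<exists>u v. e = {u, v} \<and> u \<noteq> v \<and> u \<in> V \<and> v \<in> V)"

definition degree :: "'a set \<Rightarrow> 'a set set \<Rightarrow> 'a \<Rightarrow> nat" where
  "degree V E u = card {v \<in> V. {u, v} \<in> E}"

definition max_degree :: "'a set \<Rightarrow> 'a set set \<Rightarrow> nat" where
  "max_degree V E = Max (insert 0 (degree V E ` V))"

definition hom_cycles :: "'a set \<Rightarrow> 'a set set \<Rightarrow> nat \<Rightarrow> 'a list set" where
  "hom_cycles V E m = {xs. length xs = m \<and> set xs \<subseteq> V \<and>
      (\<forall>i<m. {xs ! i, xs ! ((i + 1) mod m)} \<in> E)}"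

definition hom_cycle_count :: "'a set \<Rightarrow> 'a set set \<Rightarrow> nat \<Rightarrow> nat" where
  "hom_cycle_count V E m = card (hom_cycles V E m)"

end

theory Submission
  imports Defs "HOL-Analysis.Convex"
begin


lemma inj_rotate_n: "inj (rotate n)"
proof (induction n)
  case 0 then show ?case by simp
next
  case (Suc n)
  have "rotate (Suc n) = rotate1 \<circ> rotate n" by (rule ext) simp
  then show ?case using inj_compose[OF inj_rotate1 Suc] by metis
qed

locale sg = fixes V :: "'a set" and E :: "'a set set" assumes sg: "simple_graph V E"
begin

lemma finV: "finite V" using sg by (simp add: simple_graph_def)

lemma edge_in: "{a,b} \<in> E \<Longrightarrow> a \<in> V \<and> b \<in> V"
proof -
  assume "{a,b} \<in> E"
  then obtain u v where "{a,b} = {u,v}" "u \<in> V" "v \<in> V" using sg unfolding simple_graph_def by blast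
  then have "a \<in> {u,v}" "b \<in> {u,v}" by (metis insertI1, metis insertI1 insert_commute)
  then show ?thesis using \<open>u \<in> V\<close> \<open>v \<in> V\<close> by blast
qed

definition walk :: "'a list \<Rightarrow> bool" where
  "walk xs \<longleftrightarrow> set xs \<subseteq> V \<and> (\<forall>i. Suc i < length xs \<longrightarrow> {xs!i, xs!Suc i} \<in> E)"
definition WW :: "nat \<Rightarrow> 'a list set" where "WW L = {xs. length xs = Suc L \<and> walk xs}"
definition Wab :: "nat \<Rightarrow> 'a \<Rightarrow> 'a \<Rightarrow> 'a list set" where
  "Wab L a b = {xs \<in> WW L. hd xs = a \<and> last xs = b}"
definition P :: "nat \<Rightarrow> 'a \<Rightarrow> 'a \<Rightarrow> nat" where "P L a b = card (Wab L a b)"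
definition adj :: "'a \<Rightarrow> 'a \<Rightarrow> nat" where "adj a b = (if {a,b} \<in> E then 1 else 0)"

lemma adj_sym: "adj a b = adj b a" by (simp add: adj_def insert_commute)

lemma finite_WW: "finite (WW L)"
proof -
  have "WW L \<subseteq> {xs. set xs \<subseteq> V \<and> length xs = Suc L}" by (auto simp: WW_def walk_def)
  then show ?thesis using finite_lists_length_eq[OF finV] finite_subset by blast
qed

lemma finite_Wab: "finite (Wab L a b)"
  using finite_WW by (simp add: Wab_def)

lemma walk_Cons: "walk (x # ys) \<longleftrightarrow> x \<in> V \<and> walk ys \<and> (ys \<noteq> [] \<longrightarrow> {x, hd ys} \<in> E)"
proof
  assume w: "walk (x # ys)"
  have "walk ys" unfolding walk_def
  proof (intro conjI allI impI)
    show "set ys \<subseteq> V" using w by (auto simp: walk_def)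
    fix i assume "Suc i < length ys"
    then show "{ys ! i, ys ! Suc i} \<in> E" using w[unfolded walk_def] by (metis Suc_less_eq length_Cons nth_Cons_Suc)
  qed
  moreover have "ys \<noteq> [] \<longrightarrow> {x, hd ys} \<in> E"
    using w[unfolded walk_def] by (metis Suc_less_eq hd_conv_nth length_Cons length_greater_0_conv nth_Cons_0 nth_Cons_Suc)
  ultimately show "x \<in> V \<and> walk ys \<and> (ys \<noteq> [] \<longrightarrow> {x, hd ys} \<in> E)" using w by (auto simp: walk_def)
next
  assume h: "x \<in> V \<and> walk ys \<and> (ys \<noteq> [] \<longrightarrow> {x, hd ys} \<in> E)"
  show "walk (x # ys)" unfolding walk_def
  proof (intro conjI allI impI)
    show "set (x # ys) \<subseteq> V" using h by (auto simp: walk_def)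
    fix i assume i: "Suc i < length (x # ys)"
    show "{(x # ys) ! i, (x # ys) ! Suc i} \<in> E"
    proof (cases i)
      case 0 then show ?thesis using h i by (auto simp: hd_conv_nth)
    next
      case (Suc j) then show ?thesis using h i by (auto simp: walk_def)
    qed
  qed
qed

lemma P_notV: "a \<notin> V \<Longrightarrow> P L a b = 0"
proof -
  assume a: "a \<notin> V"
  have "Wab L a b = {}"
  proof (rule ccontr)
    assume "Wab L a b \<noteq> {}"
    then obtain xs where "xs \<in> Wab L a b" by blast
    then have "length xs = Suc L" "set xs \<subseteq> V" "hd xs = a" by (auto simp: Wab_def WW_def walk_def)
    then show False using a by (metis hd_in_set list.size(3) nat.distinct(1) subsetD)
  qed
  then show ?thesis by (simp add: P_def)
qed

lemma P_0: "P 0 a b = (if a = b \<and> a \<in> V then 1 else 0)"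
proof -
  have "Wab 0 a b = (if a = b \<and> a \<in> V then {[a]} else {})"
    by (auto simp: Wab_def WW_def walk_def length_Suc_conv)
  then show ?thesis by (auto simp: P_def)
qed

lemma P_Suc: "P (Suc L) a b = (\<Sum>c\<in>V. adj a c * P L c b)"
proof -
  have eq: "Wab (Suc L) a b = (\<Union>c\<in>{c\<in>V. {a,c}\<in>E}. (Cons a) ` Wab L c b)"
  proof (intro equalityI subsetI)
    fix xs assume "xs \<in> Wab (Suc L) a b"
    then have l: "length xs = Suc (Suc L)" and w: "walk xs" and h: "hd xs = a" and la: "last xs = b"
      by (auto simp: Wab_def WW_def)
    then obtain ys where xs: "xs = a # ys" by (cases xs) auto
    then have ly: "length ys = Suc L" using l by simp
    then have ne: "ys \<noteq> []" by auto
    have wc: "a \<in> V" "walk ys" "{a, hd ys} \<in> E" using w ne by (auto simp: xs walk_Cons)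
    then have "hd ys \<in> V" using edge_in by blast
    moreover have "ys \<in> Wab L (hd ys) b" using ly wc la ne by (auto simp: Wab_def WW_def xs)
    ultimately show "xs \<in> (\<Union>c\<in>{c\<in>V. {a,c}\<in>E}. (Cons a) ` Wab L c b)" using wc xs by blast
  next
    fix xs assume "xs \<in> (\<Union>c\<in>{c\<in>V. {a,c}\<in>E}. (Cons a) ` Wab L c b)"
    then obtain c ys where c: "c \<in> V" "{a,c} \<in> E" and ys: "ys \<in> Wab L c b" and xs: "xs = a # ys" by blast
    then have ly: "length ys = Suc L" "walk ys" "hd ys = c" "last ys = b" by (auto simp: Wab_def WW_def)
    then have "ys \<noteq> []" by auto
    then show "xs \<in> Wab (Suc L) a b" using c ly edge_in[OF c(2)] by (auto simp: Wab_def WW_def xs walk_Cons)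
  qed
  have "card (Wab (Suc L) a b) = (\<Sum>c\<in>{c\<in>V. {a,c}\<in>E}. card ((Cons a) ` Wab L c b))"
    unfolding eq
  proof (rule card_UN_disjoint)
    show "finite {c \<in> V. {a, c} \<in> E}" using finV by simp
    show "\<forall>i\<in>{c \<in> V. {a, c} \<in> E}. finite ((#) a ` Wab L i b)" using finite_Wab by blast
    show "\<forall>i\<in>{c \<in> V. {a, c} \<in> E}. \<forall>j\<in>{c \<in> V. {a, c} \<in> E}. i \<noteq> j \<longrightarrow> (#) a ` Wab L i b \<inter> (#) a ` Wab L j b = {}"
      by (auto simp: Wab_def)
  qed
  also have "\<dots> = (\<Sum>c\<in>{c\<in>V. {a,c}\<in>E}. P L c b)"
    by (simp add: card_image P_def)
  also have "\<dots> = (\<Sum>c\<in>V. adj a c * P L c b)"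
    by (simp add: sum.inter_filter finV adj_def, rule sum.cong, auto)
  finally show ?thesis by (simp add: P_def)
qed

lemma P_add: "P (i + j) a b = (\<Sum>c\<in>V. P i a c * P j c b)"
proof (induction i arbitrary: a)
  case 0
  show ?case
  proof (cases "a \<in> V")
    case True
    have "(\<Sum>c\<in>V. P 0 a c * P j c b) = (\<Sum>c\<in>V. if a = c then P j a b else 0)"
      by (rule sum.cong) (auto simp: P_0)
    then show ?thesis using True finV by simp
  next
    case False then show ?thesis by (simp add: P_0 P_notV)
  qed
next
  case (Suc i)
  have "P (Suc i + j) a b = (\<Sum>c\<in>V. adj a c * P (i + j) c b)" by (simp add: P_Suc)
  also have "\<dots> = (\<Sum>c\<in>V. \<Sum>d\<in>V. adj a c * (P i c d * P j d b))"
    by (simp add: Suc sum_distrib_left)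
  also have "\<dots> = (\<Sum>d\<in>V. \<Sum>c\<in>V. adj a c * P i c d * P j d b)"
    by (subst sum.swap) (simp add: mult.assoc)
  also have "\<dots> = (\<Sum>d\<in>V. P (Suc i) a d * P j d b)"
    by (simp add: P_Suc sum_distrib_right)
  finally show ?case .
qed

lemma P_1: "P 1 a b = adj a b"
proof -
  have "P 1 a b = (\<Sum>c\<in>V. adj a c * (if c = b \<and> c \<in> V then 1 else 0))"
    using P_Suc[of 0 a b] by (simp add: P_0)
  also have "\<dots> = adj a b"
  proof (cases "b \<in> V")
    case True then show ?thesis by (simp add: if_distrib finV cong: if_cong)
  next
    case False then show ?thesis using edge_in by (auto simp: adj_def intro!: sum.neutral)
  qed
  finally show ?thesis .
qed

lemma P_Suc': "P (Suc L) a b = (\<Sum>c\<in>V. P L a c * adj c b)"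
  using P_add[of L 1 a b] P_1 by simp

lemma P_sym: "P L a b = P L b a"
proof (induction L arbitrary: a b)
  case 0 then show ?case by (auto simp: P_0)
next
  case (Suc L)
  have "P (Suc L) a b = (\<Sum>c\<in>V. adj a c * P L c b)" by (simp add: P_Suc)
  also have "\<dots> = (\<Sum>c\<in>V. P L b c * adj c a)" using Suc by (simp add: adj_sym mult.commute)
  also have "\<dots> = P (Suc L) b a" by (simp add: P_Suc')
  finally show ?case .
qed

end


context sg
begin

definition TT :: "nat \<Rightarrow> nat" where "TT j = (\<Sum>a\<in>V. \<Sum>b\<in>V. P j a b ^ 2)"

lemma walk_close:
  assumes "length xs = m" "m \<ge> 1"
  shows "walk (xs @ [hd xs]) \<longleftrightarrow> set xs \<subseteq> V \<and> (\<forall>i<m. {xs!i, xs!((i+1) mod m)} \<in> E)"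
proof -
  have ne: "xs \<noteq> []" using assms by auto
  have eqs: "{(xs@[hd xs])!i, (xs@[hd xs])!Suc i} = {xs!i, xs!((i+1) mod m)}" if "i < m" for i
  proof (cases "Suc i < m")
    case True then show ?thesis using that assms by (simp add: nth_append)
  next
    case False
    then have "Suc i = m" using that by simp
    then show ?thesis using that assms ne by (simp add: nth_append hd_conv_nth)
  qed
  have "set (xs @ [hd xs]) = set xs" using ne by auto
  moreover have "(\<forall>i. Suc i < length (xs @ [hd xs]) \<longrightarrow> {(xs@[hd xs])!i, (xs@[hd xs])!Suc i} \<in> E)
       \<longleftrightarrow> (\<forall>i<m. {xs!i, xs!((i+1) mod m)} \<in> E)"
    using eqs assms by auto
  ultimately show ?thesis by (simp add: walk_def)
qed

lemma card_cycles:
  assumes "m \<ge> 1"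
  shows "card (hom_cycles V E m) = (\<Sum>a\<in>V. P m a a)"
proof -
  define Cl where "Cl = {ys \<in> WW m. hd ys = last ys}"
  have Cl_eq: "Cl = (\<Union>a\<in>V. Wab m a a)"
  proof (intro equalityI subsetI)
    fix ys assume "ys \<in> Cl"
    then have "length ys = Suc m" "set ys \<subseteq> V" "hd ys = last ys" "ys \<in> WW m"
      by (auto simp: Cl_def WW_def walk_def)
    moreover then have "hd ys \<in> V" by (metis Zero_not_Suc hd_in_set list.size(3) subsetD)
    ultimately show "ys \<in> (\<Union>a\<in>V. Wab m a a)" by (auto simp: Wab_def)
  qed (auto simp: Cl_def Wab_def)
  have "card Cl = (\<Sum>a\<in>V. P m a a)"
    unfolding Cl_eq P_def
  proof (rule card_UN_disjoint)
    show "finite V" by (rule finV)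
    show "\<forall>i\<in>V. finite (Wab m i i)" using finite_Wab by blast
  qed (auto simp: Wab_def)
  moreover have "bij_betw (\<lambda>xs. xs @ [hd xs]) (hom_cycles V E m) Cl"
  proof (rule bij_betw_imageI)
    show "inj_on (\<lambda>xs. xs @ [hd xs]) (hom_cycles V E m)"
      by (auto simp: inj_on_def hom_cycles_def)
    show "(\<lambda>xs. xs @ [hd xs]) ` hom_cycles V E m = Cl"
    proof (intro equalityI subsetI)
      fix ys assume "ys \<in> (\<lambda>xs. xs @ [hd xs]) ` hom_cycles V E m"
      then obtain xs where xs: "xs \<in> hom_cycles V E m" "ys = xs @ [hd xs]" by blast
      then have "length xs = m" by (simp add: hom_cycles_def)
      then have "xs \<noteq> []" using assms by auto
      then show "ys \<in> Cl" using xs walk_close[OF \<open>length xs = m\<close> assms]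
        by (auto simp: Cl_def WW_def hom_cycles_def)
    next
      fix ys assume ys: "ys \<in> Cl"
      then have l: "length ys = Suc m" and w: "walk ys" and hl: "hd ys = last ys"
        by (auto simp: Cl_def WW_def)
      define xs where "xs = butlast ys"
      have lx: "length xs = m" using l by (simp add: xs_def)
      then have nex: "xs \<noteq> []" using assms by auto
      have yne: "ys \<noteq> []" using l by auto
      have "hd xs = hd ys" using nex yne unfolding xs_def by (metis append_butlast_last_id hd_append2)
      then have ysx: "ys = xs @ [hd xs]" using yne hl by (simp add: xs_def)
      then have "xs \<in> hom_cycles V E m" using w walk_close[OF lx assms] lx by (simp add: hom_cycles_def)
      then show "ys \<in> (\<lambda>xs. xs @ [hd xs]) ` hom_cycles V E m" using ysx by blast
    qed
  qed
  ultimately show ?thesis by (metis bij_betw_same_card)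
qed

lemma card_cycles_TT: "k \<ge> 1 \<Longrightarrow> card (hom_cycles V E (2 * k)) = TT k"
proof -
  assume k: "k \<ge> 1"
  have "card (hom_cycles V E (2 * k)) = (\<Sum>a\<in>V. P (k + k) a a)" using card_cycles[of "2*k"] k
    by (simp add: mult_2)
  also have "\<dots> = (\<Sum>a\<in>V. \<Sum>b\<in>V. P k a b ^ 2)"
    by (simp add: P_add power2_eq_square P_sym[of k _ _] cong: sum.cong)
  finally show ?thesis by (simp add: TT_def)
qed

lemma TT_mid: "TT (Suc j) = (\<Sum>a\<in>V. \<Sum>b\<in>V. P j a b * P (Suc (Suc j)) a b)"
proof -
  have "TT (Suc j) = (\<Sum>a\<in>V. P (Suc j + Suc j) a a)"
    by (simp add: TT_def P_add power2_eq_square P_sym[of "Suc j" _ _] del: add_Suc_right add_Suc)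
  also have "\<dots> = (\<Sum>a\<in>V. P (j + Suc (Suc j)) a a)" by simp
  also have "\<dots> = (\<Sum>a\<in>V. \<Sum>b\<in>V. P j a b * P (Suc (Suc j)) a b)"
    by (subst P_add) (simp add: P_sym[of "Suc (Suc j)" _ _])
  finally show ?thesis .
qed

lemma TT_cs: "TT (Suc j) ^ 2 \<le> TT j * TT (Suc (Suc j))"
proof -
  define f where "f p = real (P j (fst p) (snd p))" for p
  define g where "g p = real (P (Suc (Suc j)) (fst p) (snd p))" for p
  have 1: "real (TT (Suc j)) = (\<Sum>p\<in>V\<times>V. f p * g p)"
    by (simp add: TT_mid f_def g_def sum.cartesian_product case_prod_beta)
  have 2: "real (TT j) = (\<Sum>p\<in>V\<times>V. (f p)^2)"
    by (simp add: TT_def f_def sum.cartesian_product case_prod_beta)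
  have 3: "real (TT (Suc (Suc j))) = (\<Sum>p\<in>V\<times>V. (g p)^2)"
    by (simp add: TT_def g_def sum.cartesian_product case_prod_beta)
  have "real (TT (Suc j)) ^ 2 \<le> real (TT j) * real (TT (Suc (Suc j)))"
    unfolding 1 2 3 by (rule Cauchy_Schwarz_ineq_sum)
  then have "real (TT (Suc j) ^ 2) \<le> real (TT j * TT (Suc (Suc j)))" by simp
  then show ?thesis by (simp only: of_nat_le_iff)
qed

lemma TT_0: "TT 0 = card V"
proof -
  have "TT 0 = (\<Sum>a\<in>V. \<Sum>b\<in>V. if b = a then 1 else 0)"
    by (auto simp: TT_def P_0 intro!: sum.cong)
  also have "\<dots> = card V" using finV by simp
  finally show ?thesis .
qed

lemma TT_logconv: "TT j ^ Suc j \<le> card V * TT (Suc j) ^ j"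
proof (induction j)
  case 0 then show ?case by (simp add: TT_0)
next
  case (Suc j)
  define x where "x = TT j"
  define y where "y = TT (Suc j)"
  define z where "z = TT (Suc (Suc j))"
  have IH: "x ^ Suc j \<le> card V * y ^ j" using Suc by (simp add: x_def y_def)
  have cs: "y^2 \<le> x * z" using TT_cs[of j] by (simp add: x_def y_def z_def)
  show ?case
  proof (cases "y = 0")
    case True then show ?thesis by (simp add: y_def)
  next
    case False
    have e: "Suc (Suc j) + j = 2 * Suc j" by simp
    have "y ^ Suc (Suc j) * y ^ j = (y^2) ^ Suc j" by (metis e power_add power_mult)
    also have "\<dots> \<le> (x * z) ^ Suc j" by (rule power_mono[OF cs]) simp
    also have "\<dots> = x ^ Suc j * z ^ Suc j" by (simp add: power_mult_distrib)
    also have "\<dots> \<le> card V * y ^ j * z ^ Suc j" by (rule mult_right_mono[OF IH]) simp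
    also have "\<dots> = (card V * z ^ Suc j) * y ^ j" by simp
    finally have "y ^ Suc (Suc j) * y ^ j \<le> (card V * z ^ Suc j) * y ^ j" .
    then have "y ^ Suc (Suc j) \<le> card V * z ^ Suc j" using False by simp
    then show ?thesis by (simp add: y_def z_def)
  qed
qed

end


context sg
begin

definition S :: "('a set \<Rightarrow> 'a set \<Rightarrow> bool) \<Rightarrow> nat \<Rightarrow> 'a list \<Rightarrow> 'a set" where
  "S R k \<alpha> = {y\<in>V. {\<alpha>!0, y} \<in> E \<and> (\<exists>t<k. R {y, \<alpha>!0} {\<alpha>!t, \<alpha>!Suc t})}"

lemma card_S:
  assumes symR: "\<forall>e\<in>E. \<forall>f\<in>E. R e f \<longrightarrow> R f e"
    and hs: "\<forall>u v w. {u, v} \<in> E \<longrightarrow> w \<in> V \<longrightarrow> card {z \<in> V. {w, z} \<in> E \<and> R {u, v} {w, z}} \<le> s"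
    and \<alpha>: "\<alpha> \<in> WW k"
  shows "card (S R k \<alpha>) \<le> k * s"
proof -
  have l: "length \<alpha> = Suc k" and w: "walk \<alpha>" using \<alpha> by (auto simp: WW_def)
  have a0: "\<alpha>!0 \<in> V" using l w by (auto simp: walk_def)
  have et: "{\<alpha>!t, \<alpha>!Suc t} \<in> E" if "t < k" for t using w l that by (auto simp: walk_def)
  define B where "B t = {z\<in>V. {\<alpha>!0, z} \<in> E \<and> R {\<alpha>!t, \<alpha>!Suc t} {\<alpha>!0, z}}" for t
  have sub: "S R k \<alpha> \<subseteq> (\<Union>t\<in>{..<k}. B t)"
  proof
    fix y assume "y \<in> S R k \<alpha>"
    then obtain t where y: "y \<in> V" "{\<alpha>!0, y} \<in> E" "t < k" "R {y, \<alpha>!0} {\<alpha>!t, \<alpha>!Suc t}"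
      by (auto simp: S_def)
    have "{y, \<alpha>!0} \<in> E" using y by (simp add: insert_commute)
    then have "R {\<alpha>!t, \<alpha>!Suc t} {y, \<alpha>!0}" using symR y et[OF y(3)] by blast
    then have "y \<in> B t" using y by (simp add: B_def insert_commute)
    then show "y \<in> (\<Union>t\<in>{..<k}. B t)" using y by blast
  qed
  have "card (S R k \<alpha>) \<le> card (\<Union>t\<in>{..<k}. B t)"
    by (rule card_mono[OF _ sub]) (auto simp: B_def intro: finite_subset[OF _ finV])
  also have "\<dots> \<le> (\<Sum>t\<in>{..<k}. card (B t))" by (rule card_UN_le) simp
  also have "\<dots> \<le> (\<Sum>t\<in>{..<k}. s)"
    by (rule sum_mono) (use hs et a0 in \<open>auto simp: B_def\<close>)
  finally show ?thesis by simp
qed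

lemma finite_S: "finite (S R k \<alpha>)"
  by (rule finite_subset[OF _ finV]) (auto simp: S_def)

lemma bad0_le:
  assumes k: "k \<ge> 1"
  shows "card {ys \<in> hom_cycles V E (2*k). \<exists>t<k. R {ys!(2*k-1), ys!0} {ys!t, ys!Suc t}}
      \<le> (\<Sum>\<alpha>\<in>WW k. \<Sum>y\<in>S R k \<alpha>. P (k-1) (last \<alpha>) y)"
proof -
  define B where "B = {ys \<in> hom_cycles V E (2*k). \<exists>t<k. R {ys!(2*k-1), ys!0} {ys!t, ys!Suc t}}"
  define Tg where "Tg = Sigma (WW k) (\<lambda>\<alpha>. \<Union>y\<in>S R k \<alpha>. Wab (k-1) (last \<alpha>) y)"
  define F where "F xs = (take (Suc k) xs, drop k xs)" for xs :: "'a list"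
  have finTg: "finite Tg" unfolding Tg_def
    by (intro finite_SigmaI finite_WW finite_UN_I finite_S finite_Wab)
  have cardTg: "card Tg = (\<Sum>\<alpha>\<in>WW k. \<Sum>y\<in>S R k \<alpha>. P (k-1) (last \<alpha>) y)"
    unfolding Tg_def
  proof (subst card_SigmaI)
    show "finite (WW k)" by (rule finite_WW)
    show "\<forall>a\<in>WW k. finite (\<Union>y\<in>S R k a. Wab (k - 1) (last a) y)"
      by (intro ballI finite_UN_I finite_S finite_Wab)
    show "(\<Sum>a\<in>WW k. card (\<Union>y\<in>S R k a. Wab (k - 1) (last a) y)) = (\<Sum>\<alpha>\<in>WW k. \<Sum>y\<in>S R k \<alpha>. P (k - 1) (last \<alpha>) y)"
    proof (rule sum.cong[OF refl])
      fix \<alpha> show "card (\<Union>y\<in>S R k \<alpha>. Wab (k - 1) (last \<alpha>) y) = (\<Sum>y\<in>S R k \<alpha>. P (k - 1) (last \<alpha>) y)"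
        unfolding P_def
      proof (rule card_UN_disjoint)
        show "finite (S R k \<alpha>)" by (rule finite_S)
        show "\<forall>i\<in>S R k \<alpha>. finite (Wab (k - 1) (last \<alpha>) i)" using finite_Wab by blast
      qed (auto simp: Wab_def)
    qed
  qed
  have inj: "inj_on F B"
  proof (rule inj_onI)
    fix xs ys assume "F xs = F ys"
    then have "take (Suc k) xs = take (Suc k) ys" "drop k xs = drop k ys" by (auto simp: F_def)
    then have "take (Suc k) xs @ drop (Suc k) xs = take (Suc k) ys @ drop (Suc k) ys"
      by (simp only: drop_Suc drop_tl)
    then show "xs = ys" by (simp only: append_take_drop_id)
  qed
  have maps: "F ` B \<subseteq> Tg"
  proof
    fix p assume "p \<in> F ` B"
    then obtain xs where xs: "xs \<in> B" "p = F xs" by blast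
    have l: "length xs = 2*k" and sV: "set xs \<subseteq> V"
      and ed: "\<And>i. i < 2*k \<Longrightarrow> {xs ! i, xs ! ((i + 1) mod (2*k))} \<in> E"
      using xs by (auto simp: B_def hom_cycles_def)
    obtain t where t: "t < k" "R {xs!(2*k-1), xs!0} {xs!t, xs!Suc t}" using xs by (auto simp: B_def)
    define \<alpha> where "\<alpha> = take (Suc k) xs"
    define \<beta> where "\<beta> = drop k xs"
    have la: "length \<alpha> = Suc k" using l k by (simp add: \<alpha>_def)
    have an: "\<And>i. i < Suc k \<Longrightarrow> \<alpha>!i = xs!i" by (simp add: \<alpha>_def)
    have aW: "\<alpha> \<in> WW k"
      unfolding WW_def walk_def
    proof (intro CollectI conjI allI impI la)
      show "set \<alpha> \<subseteq> V" unfolding \<alpha>_def by (rule subset_trans[OF set_take_subset sV])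
      fix i assume "Suc i < length \<alpha>"
      then have i: "Suc i < Suc k" using la by simp
      have "(i + 1) mod (2*k) = Suc i" using i by simp
      then show "{\<alpha> ! i, \<alpha> ! Suc i} \<in> E" using ed[of i] i an[of i] an[of "Suc i"] by simp
    qed
    have lb: "length \<beta> = Suc (k-1)" using l k by (simp add: \<beta>_def)
    have bn: "\<And>i. i < k \<Longrightarrow> \<beta>!i = xs!(k+i)" using l by (simp add: \<beta>_def)
    have bne: "\<beta> \<noteq> []" using lb by auto
    have lastb: "last \<beta> = xs!(2*k-1)"
      using bne l k by (simp add: \<beta>_def last_conv_nth mult_2)
    have hdb: "hd \<beta> = last \<alpha>"
    proof -
      have "hd \<beta> = xs!k" using bne bn[of 0] k by (simp add: hd_conv_nth)
      moreover have "\<alpha> \<noteq> []" using la by auto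
      then have "last \<alpha> = xs!k" using la an[of k] by (simp add: last_conv_nth)
      ultimately show ?thesis by simp
    qed
    have bW: "\<beta> \<in> Wab (k-1) (last \<alpha>) (xs!(2*k-1))"
      unfolding Wab_def WW_def walk_def
    proof (intro CollectI conjI allI impI lb hdb lastb)
      show "set \<beta> \<subseteq> V" unfolding \<beta>_def by (rule subset_trans[OF set_drop_subset sV])
      fix i assume "Suc i < length \<beta>"
      then have i: "Suc i < k" using lb k by simp
      have "(k + i + 1) mod (2*k) = k + Suc i" using i by simp
      then show "{\<beta> ! i, \<beta> ! Suc i} \<in> E" using ed[of "k+i"] i bn[of i] bn[of "Suc i"] by simp
    qed
    have yS: "xs!(2*k-1) \<in> S R k \<alpha>"
    proof -
      have "xs!(2*k-1) \<in> V" using sV l k by (metis diff_less nth_mem subsetD zero_less_numeral mult_pos_pos less_le_trans zero_less_one)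
      moreover have "(2*k - 1 + 1) mod (2*k) = 0" using k by simp
      then have "{xs!(2*k-1), xs!0} \<in> E" using ed[of "2*k-1"] k by simp
      then have "{\<alpha>!0, xs!(2*k-1)} \<in> E" using an[of 0] by (simp add: insert_commute)
      moreover have "R {xs!(2*k-1), \<alpha>!0} {\<alpha>!t, \<alpha>!Suc t}" using t an[of 0] an[of t] an[of "Suc t"] by simp
      ultimately show ?thesis using t(1) by (auto simp: S_def)
    qed
    show "p \<in> Tg" using xs(2) aW bW yS unfolding Tg_def F_def \<alpha>_def[symmetric] \<beta>_def[symmetric] by blast
  qed
  have "card B \<le> card Tg" by (rule card_inj_on_le[OF inj maps finTg])
  then show ?thesis using cardTg by (simp add: B_def)
qed

lemma sum_WW:
  fixes h :: "'a \<Rightarrow> 'a \<Rightarrow> real"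
  shows "(\<Sum>\<alpha>\<in>WW L. h (hd \<alpha>) (last \<alpha>)) = (\<Sum>u\<in>V. \<Sum>v\<in>V. real (P L u v) * h u v)"
proof -
  have eq: "WW L = (\<Union>p\<in>V\<times>V. Wab L (fst p) (snd p))"
  proof (intro equalityI subsetI)
    fix xs assume "xs \<in> WW L"
    then have "length xs = Suc L" "set xs \<subseteq> V" by (auto simp: WW_def walk_def)
    then have "hd xs \<in> V" "last xs \<in> V" by (metis Zero_not_Suc hd_in_set last_in_set list.size(3) subsetD)+
    then show "xs \<in> (\<Union>p\<in>V\<times>V. Wab L (fst p) (snd p))" using \<open>xs \<in> WW L\<close> by (auto simp: Wab_def)
  qed (auto simp: Wab_def)
  have "(\<Sum>\<alpha>\<in>WW L. h (hd \<alpha>) (last \<alpha>)) = (\<Sum>p\<in>V\<times>V. \<Sum>\<alpha>\<in>Wab L (fst p) (snd p). h (hd \<alpha>) (last \<alpha>))"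
    unfolding eq
  proof (rule sum.UNION_disjoint)
    show "finite (V \<times> V)" using finV by simp
    show "\<forall>i\<in>V \<times> V. finite (Wab L (fst i) (snd i))" using finite_Wab by blast
    show "\<forall>i\<in>V \<times> V. \<forall>j\<in>V \<times> V. i \<noteq> j \<longrightarrow> Wab L (fst i) (snd i) \<inter> Wab L (fst j) (snd j) = {}"
      by (auto simp: Wab_def prod_eq_iff)
  qed
  also have "\<dots> = (\<Sum>p\<in>V\<times>V. real (P L (fst p) (snd p)) * h (fst p) (snd p))"
    by (rule sum.cong[OF refl]) (simp add: Wab_def P_def)
  also have "\<dots> = (\<Sum>u\<in>V. \<Sum>v\<in>V. real (P L u v) * h u v)"
    by (simp add: sum.cartesian_product case_prod_beta)
  finally show ?thesis .
qed

end


context sg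
begin

lemma deg_le: "y \<in> V \<Longrightarrow> (\<Sum>u\<in>V. real (adj u y)) \<le> real (max_degree V E)"
proof -
  assume y: "y \<in> V"
  have "(\<Sum>u\<in>V. real (adj u y)) = real (\<Sum>u\<in>V. if {y,u} \<in> E then 1 else 0)"
    by (simp add: adj_def insert_commute)
  also have "(\<Sum>u\<in>V. if {y,u} \<in> E then 1 else (0::nat)) = card {u\<in>V. {y,u} \<in> E}"
    using finV by (simp add: sum.inter_filter[symmetric])
  also have "\<dots> = degree V E y" by (simp add: degree_def)
  also have "\<dots> \<le> max_degree V E" unfolding max_degree_def
    using y finV by (intro Max_ge) auto
  finally show ?thesis by simp
qed

lemma bad0_real:
  assumes k: "k \<ge> 1"
    and symR: "\<forall>e\<in>E. \<forall>f\<in>E. R e f \<longrightarrow> R f e"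
    and hs: "\<forall>u v w. {u, v} \<in> E \<longrightarrow> w \<in> V \<longrightarrow> card {z \<in> V. {w, z} \<in> E \<and> R {u, v} {w, z}} \<le> s"
  shows "real (card {ys \<in> hom_cycles V E (2*k). \<exists>t<k. R {ys!(2*k-1), ys!0} {ys!t, ys!Suc t}})
      \<le> sqrt (real (k*s)) * (sqrt (real (TT k)) * sqrt (real (max_degree V E) * real (TT (k-1))))"
proof -
  define g where "g u v = (\<Sum>y\<in>V. real (adj u y) * real (P (k-1) v y) ^ 2)" for u v
  have g0: "g u v \<ge> 0" for u v unfolding g_def by (intro sum_nonneg) simp
  have step1: "real (\<Sum>y\<in>S R k \<alpha>. P (k-1) (last \<alpha>) y) \<le> sqrt (real (k*s)) * sqrt (g (hd \<alpha>) (last \<alpha>))"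
    if \<alpha>: "\<alpha> \<in> WW k" for \<alpha>
  proof -
    define f where "f y = real (P (k-1) (last \<alpha>) y)" for y
    have "\<alpha> \<noteq> []" using \<alpha> by (auto simp: WW_def)
    then have hd0: "hd \<alpha> = \<alpha>!0" by (simp add: hd_conv_nth)
    have "(\<Sum>y\<in>S R k \<alpha>. f y)^2 \<le> (\<Sum>y\<in>S R k \<alpha>. (f y)^2) * real (card (S R k \<alpha>))"
      by (rule sum_squared_le_sum_of_squares)
    also have "\<dots> \<le> g (hd \<alpha>) (last \<alpha>) * real (k * s)"
    proof (rule mult_mono)
      have "(\<Sum>y\<in>S R k \<alpha>. (f y)^2) = (\<Sum>y\<in>S R k \<alpha>. real (adj (hd \<alpha>) y) * (f y)^2)"
        by (rule sum.cong[OF refl]) (simp add: S_def adj_def hd0)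
      also have "\<dots> \<le> (\<Sum>y\<in>V. real (adj (hd \<alpha>) y) * (f y)^2)"
        by (rule sum_mono2[OF finV]) (auto simp: S_def)
      finally show "(\<Sum>y\<in>S R k \<alpha>. (f y)^2) \<le> g (hd \<alpha>) (last \<alpha>)" by (simp add: g_def f_def)
      show "real (card (S R k \<alpha>)) \<le> real (k * s)" using card_S[OF symR hs \<alpha>] by (metis of_nat_le_iff)
    qed (auto intro: g0 sum_nonneg)
    finally have "(\<Sum>y\<in>S R k \<alpha>. f y)^2 \<le> real (k * s) * g (hd \<alpha>) (last \<alpha>)" by (simp only: mult.commute)
    then have "(\<Sum>y\<in>S R k \<alpha>. f y) \<le> sqrt (real (k * s) * g (hd \<alpha>) (last \<alpha>))"
      by (rule real_le_rsqrt)
    then show ?thesis by (simp add: f_def real_sqrt_mult)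
  qed
  have "real (card {ys \<in> hom_cycles V E (2*k). \<exists>t<k. R {ys!(2*k-1), ys!0} {ys!t, ys!Suc t}})
      \<le> real (\<Sum>\<alpha>\<in>WW k. \<Sum>y\<in>S R k \<alpha>. P (k-1) (last \<alpha>) y)"
    using bad0_le[OF k, of R] by linarith
  also have "\<dots> = (\<Sum>\<alpha>\<in>WW k. real (\<Sum>y\<in>S R k \<alpha>. P (k-1) (last \<alpha>) y))" by simp
  also have "\<dots> \<le> (\<Sum>\<alpha>\<in>WW k. sqrt (real (k*s)) * sqrt (g (hd \<alpha>) (last \<alpha>)))"
    by (rule sum_mono) (rule step1)
  also have "\<dots> = sqrt (real (k*s)) * (\<Sum>\<alpha>\<in>WW k. sqrt (g (hd \<alpha>) (last \<alpha>)))"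
    by (simp add: sum_distrib_left)
  also have "(\<Sum>\<alpha>\<in>WW k. sqrt (g (hd \<alpha>) (last \<alpha>))) = (\<Sum>u\<in>V. \<Sum>v\<in>V. real (P k u v) * sqrt (g u v))"
    by (rule sum_WW)
  also have "\<dots> \<le> sqrt (real (TT k)) * sqrt (real (max_degree V E) * real (TT (k-1)))"
  proof -
    define a where "a p = real (P k (fst p) (snd p))" for p
    define b where "b p = sqrt (g (fst p) (snd p))" for p
    have e1: "(\<Sum>u\<in>V. \<Sum>v\<in>V. real (P k u v) * sqrt (g u v)) = (\<Sum>p\<in>V\<times>V. a p * b p)"
      by (simp add: a_def b_def sum.cartesian_product case_prod_beta)
    have e2: "real (TT k) = (\<Sum>p\<in>V\<times>V. (a p)^2)"
      by (simp add: TT_def a_def sum.cartesian_product case_prod_beta)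
    have e3: "(\<Sum>p\<in>V\<times>V. (b p)^2) = (\<Sum>u\<in>V. \<Sum>v\<in>V. g u v)"
      by (simp add: b_def g0 sum.cartesian_product case_prod_beta)
    have gsum: "(\<Sum>u\<in>V. \<Sum>v\<in>V. g u v) \<le> real (max_degree V E) * real (TT (k-1))"
    proof -
      have "(\<Sum>u\<in>V. \<Sum>v\<in>V. g u v) = (\<Sum>u\<in>V. \<Sum>v\<in>V. \<Sum>y\<in>V. real (adj u y) * real (P (k-1) v y) ^ 2)"
        by (simp add: g_def)
      also have "\<dots> = (\<Sum>y\<in>V. \<Sum>v\<in>V. \<Sum>u\<in>V. real (adj u y) * real (P (k-1) v y) ^ 2)"
      proof -
        have "(\<Sum>u\<in>V. \<Sum>v\<in>V. \<Sum>y\<in>V. real (adj u y) * real (P (k-1) v y) ^ 2)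
           = (\<Sum>v\<in>V. \<Sum>u\<in>V. \<Sum>y\<in>V. real (adj u y) * real (P (k-1) v y) ^ 2)" by (rule sum.swap)
        also have "\<dots> = (\<Sum>v\<in>V. \<Sum>y\<in>V. \<Sum>u\<in>V. real (adj u y) * real (P (k-1) v y) ^ 2)"
          by (rule sum.cong[OF refl], rule sum.swap)
        also have "\<dots> = (\<Sum>y\<in>V. \<Sum>v\<in>V. \<Sum>u\<in>V. real (adj u y) * real (P (k-1) v y) ^ 2)"
          by (rule sum.swap)
        finally show ?thesis .
      qed
      also have "\<dots> = (\<Sum>y\<in>V. \<Sum>v\<in>V. (\<Sum>u\<in>V. real (adj u y)) * real (P (k-1) v y) ^ 2)"
        by (simp add: sum_distrib_right)
      also have "\<dots> \<le> (\<Sum>y\<in>V. \<Sum>v\<in>V. real (max_degree V E) * real (P (k-1) v y) ^ 2)"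
        by (intro sum_mono mult_right_mono deg_le) auto
      also have "\<dots> = real (max_degree V E) * (\<Sum>v\<in>V. \<Sum>y\<in>V. real (P (k-1) v y) ^ 2)"
        by (subst sum.swap) (simp add: sum_distrib_left)
      also have "(\<Sum>v\<in>V. \<Sum>y\<in>V. real (P (k-1) v y) ^ 2) = real (TT (k-1))"
        by (simp add: TT_def)
      finally show ?thesis .
    qed
    have "(\<Sum>p\<in>V\<times>V. a p * b p)^2 \<le> (\<Sum>p\<in>V\<times>V. (a p)^2) * (\<Sum>p\<in>V\<times>V. (b p)^2)"
      by (rule Cauchy_Schwarz_ineq_sum)
    also have "\<dots> \<le> real (TT k) * (real (max_degree V E) * real (TT (k-1)))"
      unfolding e2[symmetric] e3 by (rule mult_left_mono[OF gsum]) simp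
    finally have "(\<Sum>p\<in>V\<times>V. a p * b p) \<le> sqrt (real (TT k) * (real (max_degree V E) * real (TT (k-1))))"
      by (rule real_le_rsqrt)
    then show ?thesis using e1 by (simp add: real_sqrt_mult)
  qed
  finally show ?thesis by (simp add: mult_left_mono)
qed

end


lemma rot_idx:
  fixes m p q :: nat
  assumes "p < m" "q < m"
  shows "(Suc p mod m + (m - 1)) mod m = p"
    and "(Suc p mod m + (q + m - Suc p) mod m) mod m = q"
    and "(Suc p mod m + Suc ((q + m - Suc p) mod m)) mod m = Suc q mod m"
proof -
  have "(Suc p mod m + (m - 1)) mod m = (Suc p + (m - 1)) mod m" by (simp add: mod_add_left_eq)
  also have "Suc p + (m - 1) = p + m" using assms by simp
  finally show "(Suc p mod m + (m - 1)) mod m = p" using assms by simp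
  have "(Suc p mod m + (q + m - Suc p) mod m) mod m = (Suc p + (q + m - Suc p)) mod m" by (simp add: mod_add_eq)
  also have "Suc p + (q + m - Suc p) = q + m" using assms by simp
  finally show "(Suc p mod m + (q + m - Suc p) mod m) mod m = q" using assms by simp
  have "(Suc p mod m + Suc ((q + m - Suc p) mod m)) mod m = ((Suc p mod m + (q + m - Suc p) mod m) + 1) mod m" by simp
  also have "\<dots> = ((Suc p + (q + m - Suc p)) + 1) mod m" by (metis mod_add_eq mod_add_left_eq)
  also have "(Suc p + (q + m - Suc p)) + 1 = Suc q + m" using assms by simp
  also have "(Suc q + m) mod m = Suc q mod m" by (rule mod_add_self2)
  finally show "(Suc p mod m + Suc ((q + m - Suc p) mod m)) mod m = Suc q mod m" .
qed

lemma choose_dir: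
  fixes i j k :: nat
  assumes "i < 2*k" "j < 2*k" "i \<noteq> j"
  shows "(j + 2*k - Suc i) mod (2*k) < k \<or> (i + 2*k - Suc j) mod (2*k) < k"
proof (cases "i < j")
  case True
  have eq: "j + 2*k - Suc i = (j - Suc i) + 2*k" using True by simp
  have a: "(j + 2*k - Suc i) mod (2*k) = j - Suc i" unfolding eq mod_add_self2 using assms by (intro mod_less) linarith
  have b: "(i + 2*k - Suc j) mod (2*k) = i + 2*k - Suc j" using assms True by (intro mod_less) linarith
  show ?thesis using a b True assms by linarith
next
  case False
  then have ji: "j < i" using assms by simp
  have eq: "i + 2*k - Suc j = (i - Suc j) + 2*k" using ji by simp
  have a: "(i + 2*k - Suc j) mod (2*k) = i - Suc j" unfolding eq mod_add_self2 using assms by (intro mod_less) linarith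
  have b: "(j + 2*k - Suc i) mod (2*k) = j + 2*k - Suc i" using assms ji by (intro mod_less) linarith
  show ?thesis using a b ji assms by linarith
qed

lemma rot_cycle:
  assumes "xs \<in> hom_cycles V E m"
  shows "rotate r xs \<in> hom_cycles V E m"
proof -
  have l: "length xs = m" and sV: "set xs \<subseteq> V" and ed: "\<And>i. i < m \<Longrightarrow> {xs ! i, xs ! ((i + 1) mod m)} \<in> E"
    using assms by (auto simp: hom_cycles_def)
  have "{rotate r xs ! i, rotate r xs ! ((i + 1) mod m)} \<in> E" if i: "i < m" for i
  proof -
    have m0: "m > 0" using i by simp
    have 1: "rotate r xs ! i = xs ! ((r + i) mod m)" using i l by (simp add: nth_rotate)
    have 2: "rotate r xs ! ((i + 1) mod m) = xs ! ((r + (i + 1) mod m) mod m)" using m0 l by (simp add: nth_rotate)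
    have 3: "(r + (i + 1) mod m) mod m = ((r + i) mod m + 1) mod m" by (simp add: mod_simps)
    show ?thesis using ed[of "(r + i) mod m"] m0 1 2 3 by simp
  qed
  then show ?thesis using l sV by (simp add: hom_cycles_def)
qed

lemma finite_hom_cycles: "finite V \<Longrightarrow> finite (hom_cycles V E m)"
proof -
  assume "finite V"
  have "hom_cycles V E m \<subseteq> {xs. set xs \<subseteq> V \<and> length xs = m}" by (auto simp: hom_cycles_def)
  then show ?thesis using finite_lists_length_eq[OF \<open>finite V\<close>] finite_subset by blast
qed

lemma bad_le:
  assumes k: "k \<ge> 1" and fin: "finite V"
    and symR: "\<forall>e\<in>E. \<forall>f\<in>E. R e f \<longrightarrow> R f e"
  shows "card {xs \<in> hom_cycles V E (2 * k).
            \<exists>i<2 * k. \<exists>j<2 * k. i \<noteq> j \<and>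
              R {xs ! i, xs ! ((i + 1) mod (2 * k))} {xs ! j, xs ! ((j + 1) mod (2 * k))}}
    \<le> 2 * k * card {ys \<in> hom_cycles V E (2*k). \<exists>t<k. R {ys!(2*k-1), ys!0} {ys!t, ys!Suc t}}"
proof -
  define m where "m = 2 * k"
  define Q where "Q ys \<longleftrightarrow> (\<exists>t<k. R {ys!(2*k-1), ys!0} {ys!t, ys!Suc t})" for ys :: "'a list"
  define B0 where "B0 = {ys \<in> hom_cycles V E m. Q ys}"
  define A where "A r = {xs \<in> hom_cycles V E m. Q (rotate r xs)}" for r
  have cover: "{xs \<in> hom_cycles V E m.
            \<exists>i<m. \<exists>j<m. i \<noteq> j \<and>
              R {xs ! i, xs ! ((i + 1) mod m)} {xs ! j, xs ! ((j + 1) mod m)}} \<subseteq> (\<Union>r\<in>{..<m}. A r)"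
  proof
    fix xs assume "xs \<in> {xs \<in> hom_cycles V E m.
            \<exists>i<m. \<exists>j<m. i \<noteq> j \<and>
              R {xs ! i, xs ! ((i + 1) mod m)} {xs ! j, xs ! ((j + 1) mod m)}}"
    then obtain i j where xs: "xs \<in> hom_cycles V E m" and ij: "i < m" "j < m" "i \<noteq> j"
      and Rij: "R {xs ! i, xs ! ((i + 1) mod m)} {xs ! j, xs ! ((j + 1) mod m)}" by blast
    have l: "length xs = m" and ed: "\<And>i. i < m \<Longrightarrow> {xs ! i, xs ! ((i + 1) mod m)} \<in> E"
      using xs by (auto simp: hom_cycles_def)
    have Rji: "R {xs ! j, xs ! ((j + 1) mod m)} {xs ! i, xs ! ((i + 1) mod m)}"
      using symR ed[OF ij(1)] ed[OF ij(2)] Rij by blast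
    have gen: "\<exists>r<m. Q (rotate r xs)"
      if pq: "p < m" "q < m" "(q + m - Suc p) mod m < k"
        and R: "R {xs ! p, xs ! ((p + 1) mod m)} {xs ! q, xs ! ((q + 1) mod m)}" for p q
    proof -
      define r where "r = Suc p mod m"
      define t where "t = (q + m - Suc p) mod m"
      define ys where "ys = rotate r xs"
      have m0: "m > 0" using pq by simp
      have t: "t < k" using pq by (simp add: t_def)
      have ly: "length ys = m" using l by (simp add: ys_def)
      have y1: "ys ! (m - 1) = xs ! p"
        using rot_idx(1)[OF pq(1,2)] m0 l by (simp add: ys_def nth_rotate r_def)
      have y0: "ys ! 0 = xs ! ((p + 1) mod m)"
        using m0 l by (simp add: ys_def nth_rotate r_def)
      have y2: "ys ! t = xs ! q"
        using rot_idx(2)[OF pq(1,2)] t k l by (simp add: ys_def nth_rotate r_def t_def m_def)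
      have y3: "ys ! Suc t = xs ! ((q + 1) mod m)"
        using rot_idx(3)[OF pq(1,2)] t k l by (simp add: ys_def nth_rotate r_def t_def m_def)
      have "Q ys" unfolding Q_def using t R y1 y0 y2 y3 by (auto simp: m_def)
      moreover have "r < m" using m0 by (simp add: r_def)
      ultimately show ?thesis by (auto simp: ys_def)
    qed
    have "\<exists>r<m. Q (rotate r xs)"
      using choose_dir[of i k j] ij gen[OF ij(1) ij(2) _ Rij] gen[OF ij(2) ij(1) _ Rji] by (auto simp: m_def)
    then show "xs \<in> (\<Union>r\<in>{..<m}. A r)" using xs by (auto simp: A_def)
  qed
  have finB0: "finite B0" using finite_hom_cycles[OF fin] by (simp add: B0_def)
  have Ar: "card (A r) \<le> card B0" for r
  proof (rule card_inj_on_le[OF _ _ finB0])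
    show "inj_on (rotate r) (A r)" using inj_rotate_n by (rule inj_on_subset) simp
    show "rotate r ` A r \<subseteq> B0" by (auto simp: A_def B0_def rot_cycle)
  qed
  have "card {xs \<in> hom_cycles V E m.
            \<exists>i<m. \<exists>j<m. i \<noteq> j \<and>
              R {xs ! i, xs ! ((i + 1) mod m)} {xs ! j, xs ! ((j + 1) mod m)}} \<le> card (\<Union>r\<in>{..<m}. A r)"
    by (rule card_mono[OF _ cover]) (auto simp: A_def intro: finite_subset[OF _ finite_hom_cycles[OF fin]])
  also have "\<dots> \<le> (\<Sum>r\<in>{..<m}. card (A r))" by (rule card_UN_le) simp
  also have "\<dots> \<le> (\<Sum>r\<in>{..<m}. card B0)" by (rule sum_mono) (rule Ar)
  finally show ?thesis by (simp add: m_def B0_def Q_def)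
qed



lemma key_arith:
  fixes k n T U :: nat
  assumes k: "k \<ge> 2" and lc: "U ^ k \<le> n * T ^ (k-1)"
  shows "sqrt (real T) * sqrt (real U) \<le> real n powr (1/(2*real k)) * real T powr (1 - 1/(2*real k))"
proof (cases "T = 0")
  case True then show ?thesis by simp
next
  case False
  then have T0: "real T > 0" by simp
  have k0: "real k > 0" using k by simp
  have Ub: "real U \<le> real n powr (1/real k) * real T powr ((real k - 1)/real k)"
  proof (cases "U = 0")
    case True then show ?thesis by simp
  next
    case False
    then have U0: "real U > 0" by simp
    have "real U = (real U powr real k) powr (1/real k)"
      using k0 by (simp add: powr_powr)
    also have "real U powr real k = real U ^ k" using U0 by (simp add: powr_realpow)
    also have "(real U ^ k) powr (1/real k) \<le> (real n * real T ^ (k-1)) powr (1/real k)"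
    proof (rule powr_mono2)
      have "real (U ^ k) \<le> real (n * T ^ (k-1))" using lc by (simp only: of_nat_le_iff)
      then show "real U ^ k \<le> real n * real T ^ (k-1)" by simp
    qed auto
    also have "\<dots> = real n powr (1/real k) * (real T ^ (k-1)) powr (1/real k)"
      by (simp add: powr_mult)
    also have "real T ^ (k-1) = real T powr (real k - 1)"
      using T0 k by (simp add: powr_realpow[symmetric] of_nat_diff)
    also have "(real T powr (real k - 1)) powr (1/real k) = real T powr ((real k - 1)/real k)"
      by (simp add: powr_powr)
    finally show ?thesis by simp
  qed
  have "sqrt (real T) * sqrt (real U) = (real T * real U) powr (1/2)"
    by (simp add: powr_half_sqrt real_sqrt_mult)
  also have "\<dots> \<le> (real T * (real n powr (1/real k) * real T powr ((real k - 1)/real k))) powr (1/2)"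
    by (rule powr_mono2) (use Ub T0 in \<open>auto intro: mult_left_mono\<close>)
  also have "real T * (real n powr (1/real k) * real T powr ((real k - 1)/real k))
      = real n powr (1/real k) * real T powr (1 + (real k - 1)/real k)"
    using T0 by (simp add: powr_add)
  also have "(real n powr (1/real k) * real T powr (1 + (real k - 1)/real k)) powr (1/2)
      = real n powr (1/real k * (1/2)) * real T powr ((1 + (real k - 1)/real k) * (1/2))"
    by (simp add: powr_mult powr_powr)
  also have "1/real k * (1/2) = 1/(2*real k)" by simp
  also have "(1 + (real k - 1)/real k) * (1/2) = 1 - 1/(2*real k)" using k0 by (simp add: field_simps)
  finally show ?thesis .
qed

lemma final_arith:
  fixes k s D n T U :: nat and B :: real
  assumes k: "k \<ge> 2" and lc: "U ^ k \<le> n * T ^ (k-1)"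
    and bB: "B \<le> real (2*k) * (sqrt (real (k*s)) * (sqrt (real T) * sqrt (real D * real U)))"
  shows "B \<le> 32 * real k powr (3/2) * sqrt (real s) * sqrt (real D)
            * real n powr (1/(2*real k)) * real T powr (1 - 1/(2*real k))"
proof -
  define X where "X = real n powr (1/(2*real k)) * real T powr (1 - 1/(2*real k))"
  have X: "sqrt (real T) * sqrt (real U) \<le> X" unfolding X_def by (rule key_arith[OF k lc])
  have kp: "real k powr (3/2) = real k * sqrt (real k)"
  proof -
    have "real k powr (1 + 1/2) = real k powr 1 * real k powr (1/2)" by (rule powr_add)
    then show ?thesis using k by (simp add: powr_half_sqrt)
  qed
  have "B \<le> (2 * real k * sqrt (real k) * sqrt (real s) * sqrt (real D)) * (sqrt (real T) * sqrt (real U))"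
    using bB by (simp add: real_sqrt_mult mult_ac)
  also have "\<dots> \<le> (2 * real k * sqrt (real k) * sqrt (real s) * sqrt (real D)) * X"
    by (rule mult_left_mono[OF X]) simp
  also have "\<dots> \<le> (32 * real k * sqrt (real k) * sqrt (real s) * sqrt (real D)) * X"
    by (rule mult_right_mono) (auto simp: X_def intro!: mult_right_mono)
  finally show ?thesis by (simp add: kp X_def mult_ac)
qed


theorem lemma2p1:
  fixes V :: "'a set" and E :: "'a set set" and R :: "'a set \<Rightarrow> 'a set \<Rightarrow> bool"
    and k s :: nat
  assumes "k \<ge> 2"
    and "simple_graph V E"
    and "\<forall>e\<in>E. \<forall>f\<in>E. R e f \<longrightarrow> R f e"
    and "\<forall>u v w. {u, v} \<in> E \<longrightarrow> w \<in> V \<longrightarrow>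
           card {z \<in> V. {w, z} \<in> E \<and> R {u, v} {w, z}} \<le> s"
  shows "real (card {xs \<in> hom_cycles V E (2 * k).
            \<exists>i<2 * k. \<exists>j<2 * k. i \<noteq> j \<and>
              R {xs ! i, xs ! ((i + 1) mod (2 * k))} {xs ! j, xs ! ((j + 1) mod (2 * k))}})
         \<le> 32 * real k powr (3 / 2) * sqrt (real s) * sqrt (real (max_degree V E))
            * real (card V) powr (1 / (2 * real k))
            * real (hom_cycle_count V E (2 * k)) powr (1 - 1 / (2 * real k))"
proof -
  interpret sg V E using assms(2) by unfold_locales
  have k1: "k \<ge> 1" using assms(1) by simp
  have bad: "card {xs \<in> hom_cycles V E (2 * k).
            \<exists>i<2 * k. \<exists>j<2 * k. i \<noteq> j \<and>
              R {xs ! i, xs ! ((i + 1) mod (2 * k))} {xs ! j, xs ! ((j + 1) mod (2 * k))}}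
    \<le> 2 * k * card {ys \<in> hom_cycles V E (2*k). \<exists>t<k. R {ys!(2*k-1), ys!0} {ys!t, ys!Suc t}}"
    by (rule bad_le[OF k1 finV assms(3)])
  have b0: "real (card {ys \<in> hom_cycles V E (2*k). \<exists>t<k. R {ys!(2*k-1), ys!0} {ys!t, ys!Suc t}})
      \<le> sqrt (real (k*s)) * (sqrt (real (TT k)) * sqrt (real (max_degree V E) * real (TT (k-1))))"
    by (rule bad0_real[OF k1 assms(3) assms(4)])
  have lc: "TT (k-1) ^ k \<le> card V * TT k ^ (k-1)"
    using TT_logconv[of "k-1"] k1 by simp
  have hc: "hom_cycle_count V E (2 * k) = TT k"
    using card_cycles_TT[OF k1] by (simp add: hom_cycle_count_def)
  have "real (card {xs \<in> hom_cycles V E (2 * k).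
            \<exists>i<2 * k. \<exists>j<2 * k. i \<noteq> j \<and>
              R {xs ! i, xs ! ((i + 1) mod (2 * k))} {xs ! j, xs ! ((j + 1) mod (2 * k))}})
      \<le> real (2 * k) * real (card {ys \<in> hom_cycles V E (2*k). \<exists>t<k. R {ys!(2*k-1), ys!0} {ys!t, ys!Suc t}})"
    using bad by (simp only: of_nat_mult[symmetric] of_nat_le_iff)
  also have "\<dots> \<le> real (2 * k) * (sqrt (real (k*s)) * (sqrt (real (TT k)) * sqrt (real (max_degree V E) * real (TT (k-1)))))"
    by (rule mult_left_mono[OF b0]) simp
  finally have bB: "real (card {xs \<in> hom_cycles V E (2 * k).
            \<exists>i<2 * k. \<exists>j<2 * k. i \<noteq> j \<and>
              R {xs ! i, xs ! ((i + 1) mod (2 * k))} {xs ! j, xs ! ((j + 1) mod (2 * k))}})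
      \<le> real (2 * k) * (sqrt (real (k*s)) * (sqrt (real (TT k)) * sqrt (real (max_degree V E) * real (TT (k-1)))))" .
  show ?thesis unfolding hc by (rule final_arith[OF assms(1) lc bB])
qed

end
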